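(* Let $k$ be an integer and $d,m\geqslant1$ integers, let $U\subset\{k+d,k+2d,\dots,k+md\}$, let $q$ be a positive integer coprime to $d$, and let $a$ be a residue class modulo $q$. If $|U|\geqslant\frac m2+\frac q2$, then the number of elements of $U+U$ that are congruent to $a$ modulo $q$ is at least $\frac2q|U|-1$.
   Context: $U+U=\{u+u':u,u'\in U\}$. *)

theory Defs
  imports Complex_Main "HOL-Number_Theory.Cong"
begin

definition sumset :: "int set \<Rightarrow> int set \<Rightarrow> int set" where
  "sumset A B = {u + v | u v. u \<in> A \<and> v \<in> B}"

end

theory Submission
  imports Defs
begin

lemma sumset_card:
  fixes A B :: "int set"
  assumes "finite A" "finite B" "A \<noteq> {}" "B \<noteq> {}"
  shows "card A + card B \<le> card (sumset A B) + 1"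
proof -
  define S1 where "S1 = (\<lambda>b. Min A + b) ` B"
  define S2 where "S2 = (\<lambda>a. a + Max B) ` A"
  have c1: "card S1 = card B" unfolding S1_def by (simp add: card_image inj_on_def)
  have c2: "card S2 = card A" unfolding S2_def by (simp add: card_image inj_on_def)
  have int: "S1 \<inter> S2 \<subseteq> {Min A + Max B}"
  proof
    fix x assume "x \<in> S1 \<inter> S2"
    then obtain a b where ab: "a \<in> A" "b \<in> B" "x = Min A + b" "x = a + Max B"
      unfolding S1_def S2_def by auto
    have "Min A \<le> a" using ab assms by simp
    moreover have "b \<le> Max B" using ab assms by simp
    ultimately show "x \<in> {Min A + Max B}" using ab by auto
  qed
  have fin: "finite S1" "finite S2" unfolding S1_def S2_def using assms by auto
  have "card (S1 \<union> S2) + card (S1 \<inter> S2) = card S1 + card S2"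
    using card_Un_Int[OF fin] by simp
  moreover have "card (S1 \<inter> S2) \<le> 1"
    using card_mono[OF _ int] by simp
  moreover have "S1 \<union> S2 \<subseteq> sumset A B"
    unfolding S1_def S2_def sumset_def using assms by (auto intro: Min_in Max_in)
  moreover have "finite (sumset A B)"
  proof -
    have "sumset A B = (\<lambda>(u,v). u + v) ` (A \<times> B)" unfolding sumset_def by auto
    thus ?thesis using assms by simp
  qed
  ultimately have "card S1 + card S2 \<le> card (sumset A B) + 1"
    using card_mono[of "sumset A B" "S1 \<union> S2"] by linarith
  thus ?thesis using c1 c2 by simp
qed

lemma class_bound:
  fixes k d m q c :: int and U :: "int set"
  assumes "d \<ge> 1" "m \<ge> 1"
    and U: "U \<subseteq> {k + j * d | j. 1 \<le> j \<and> j \<le> m}"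
    and "q \<ge> 1" and cop: "coprime q d"
  shows "real (card {u\<in>U. u mod q = c}) \<le> (real_of_int m + q - 1) / q"
proof -
  define f where "f u = ((u - k) div d - 1) div q" for u
  have jd: "(k + j * d - k) div d = j" for j using assms by simp
  have inj: "inj_on f {u\<in>U. u mod q = c}"
  proof (rule inj_onI)
    fix u u' assume u: "u \<in> {u\<in>U. u mod q = c}" and u': "u' \<in> {u\<in>U. u mod q = c}"
      and eq: "f u = f u'"
    obtain j where j: "u = k + j * d" using u U by auto
    obtain j' where j': "u' = k + j' * d" using u' U by auto
    have "u mod q = u' mod q" using u u' by simp
    hence "q dvd u - u'" by (simp add: mod_eq_dvd_iff)
    moreover have "u - u' = (j - j') * d" using j j' by (simp add: algebra_simps)
    ultimately have "q dvd (j - j')" using cop coprime_dvd_mult_left_iff[of q d "j - j'"]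
      by (simp add: coprime_commute)
    hence "q dvd (j - 1) - (j' - 1)" by simp
    hence m: "(j - 1) mod q = (j' - 1) mod q" by (simp add: mod_eq_dvd_iff)
    have dv: "(j - 1) div q = (j' - 1) div q" using eq unfolding f_def j j' jd .
    have "j - 1 = j' - 1"
      using m dv by (metis div_mult_mod_eq)
    thus "u = u'" using j j' by simp
  qed
  have img: "f ` {u\<in>U. u mod q = c} \<subseteq> {0..(m-1) div q}"
  proof
    fix x assume "x \<in> f ` {u\<in>U. u mod q = c}"
    then obtain u where u: "u \<in> U" "x = f u" by auto
    obtain j where j: "u = k + j * d" "1 \<le> j" "j \<le> m" using u U by auto
    have "x = (j - 1) div q" using u j unfolding f_def by (simp only: jd)
    moreover have "0 \<le> (j-1) div q" using j assms by (simp add: pos_imp_zdiv_nonneg_iff)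
    moreover have "(j-1) div q \<le> (m-1) div q" using j assms by (simp add: zdiv_mono1)
    ultimately show "x \<in> {0..(m-1) div q}" by simp
  qed
  have "card {u\<in>U. u mod q = c} = card (f ` {u\<in>U. u mod q = c})"
    using inj by (simp add: card_image)
  also have "\<dots> \<le> card {0..(m-1) div q}" using img by (intro card_mono) auto
  also have "\<dots> = nat ((m-1) div q + 1)" by simp
  finally have le: "card {u\<in>U. u mod q = c} \<le> nat ((m-1) div q + 1)" .
  have nn: "0 \<le> (m-1) div q" using assms by (simp add: pos_imp_zdiv_nonneg_iff)
  have "q * ((m-1) div q) \<le> m - 1"
  proof -
    have "q * ((m-1) div q) = (m-1) - (m-1) mod q" by (simp add: minus_mod_eq_mult_div)
    moreover have "0 \<le> (m-1) mod q" using assms by simp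
    ultimately show ?thesis by linarith
  qed
  hence "real_of_int q * real_of_int ((m-1) div q) \<le> real_of_int m - 1"
    by (metis of_int_diff of_int_le_iff of_int_mult of_int_1)
  hence "real_of_int ((m-1) div q) \<le> (real_of_int m - 1) / q"
    using assms by (simp add: field_simps mult.commute)
  moreover have "real (card {u\<in>U. u mod q = c}) \<le> real_of_int ((m-1) div q) + 1"
    using le nn by linarith
  ultimately have "real (card {u\<in>U. u mod q = c}) \<le> (real_of_int m - 1) / q + 1" by linarith
  also have "\<dots> = (real_of_int m + q - 1) / q" using assms by (simp add: field_simps)
  finally show ?thesis .
qed

theorem mainTheorem8:
  fixes k d m q a :: int and U :: "int set"
  assumes "d \<ge> 1" and "m \<ge> 1"
    and "U \<subseteq> {k + j * d | j. 1 \<le> j \<and> j \<le> m}"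
    and "q \<ge> 1" and "coprime q d"
    and "real (card U) \<ge> real_of_int m / 2 + real_of_int q / 2"
  shows "real (card {x \<in> sumset U U. [x = a] (mod q)}) \<ge> 2 / real_of_int q * real (card U) - 1"
proof -
  define C where "C c = {u\<in>U. u mod q = c}" for c
  define n where "n = card U"
  have finU: "finite U"
  proof -
    have "U \<subseteq> (\<lambda>j. k + j * d) ` {1..m}" using assms(3) by fastforce
    thus ?thesis by (rule finite_subset) simp
  qed
  have finC: "finite (C c)" for c unfolding C_def using finU by simp
  have bound: "real (card (C c)) \<le> (real_of_int m + q - 1) / q" for c
    unfolding C_def using class_bound[OF assms(1-5)] .
  have Uun: "U = (\<Union>c\<in>{0..<q}. C c)"
  proof -
    have "u mod q \<in> {0..<q}" for u using assms(4) by simp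
    thus ?thesis unfolding C_def by auto
  qed
  have s1: "(\<Sum>c\<in>{0..<q}. card (C c)) = n"
  proof -
    have "card U = card (\<Union>c\<in>{0..<q}. C c)" using Uun by simp
    also have "\<dots> = (\<Sum>c\<in>{0..<q}. card (C c))"
      by (rule card_UN_disjoint) (auto simp: finC, auto simp: C_def)
    finally show ?thesis unfolding n_def by simp
  qed
  have s2: "(\<Sum>c\<in>{0..<q}. card (C ((a - c) mod q))) = (\<Sum>c\<in>{0..<q}. card (C c))"
  proof -
    have inv: "(a - (a - c) mod q) mod q = c" if "c \<in> {0..<q}" for c
    proof -
      have "(a - (a - c) mod q) mod q = (a - (a - c)) mod q" by (rule mod_diff_right_eq)
      also have "\<dots> = c" using that by simp
      finally show ?thesis .
    qed
    have rng: "(a - c) mod q \<in> {0..<q}" for c using assms(4) by simp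
    show ?thesis
      by (rule sum.reindex_bij_witness[where i="\<lambda>c. (a - c) mod q" and j="\<lambda>c. (a - c) mod q"]) (simp_all only: inv rng)
  qed
  define g where "g c = real (card (C c)) + real (card (C ((a - c) mod q)))" for c
  have sg: "(\<Sum>c\<in>{0..<q}. g c) = 2 * real n"
  proof -
    have "(\<Sum>c\<in>{0..<q}. g c) = real (\<Sum>c\<in>{0..<q}. card (C c)) + real (\<Sum>c\<in>{0..<q}. card (C ((a - c) mod q)))"
      unfolding g_def sum.distrib of_nat_sum ..
    also have "\<dots> = 2 * real n" unfolding s2 s1 by simp
    finally show ?thesis .
  qed
  have "\<exists>c\<in>{0..<q}. g c \<ge> 2 * real n / q"
  proof (rule ccontr)
    assume "\<not> (\<exists>c\<in>{0..<q}. g c \<ge> 2 * real n / q)"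
    hence lt: "\<forall>c\<in>{0..<q}. g c < 2 * real n / q" by (simp add: not_le)
    have "(\<Sum>c\<in>{0..<q}. g c) < (\<Sum>c\<in>{0..<q}. 2 * real n / q)"
      using assms(4) lt by (intro sum_strict_mono) auto
    also have "\<dots> = 2 * real n" using assms(4) by simp
    finally show False using sg by simp
  qed
  then obtain c where c: "c \<in> {0..<q}" "g c \<ge> 2 * real n / q" by blast
  define A where "A = C c"
  define B where "B = C ((a - c) mod q)"
  have q0: "real_of_int q > 0" using assms(4) by simp
  have big: "2 * real n / q > (real_of_int m + q - 1) / q"
    using assms(6) q0 unfolding n_def by (intro divide_strict_right_mono) auto
  have gA: "real (card A) + real (card B) \<ge> 2 * real n / q" using c unfolding g_def A_def B_def by simp
  have bA: "real (card A) \<le> (real_of_int m + q - 1) / q" unfolding A_def by (rule bound)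
  have bB: "real (card B) \<le> (real_of_int m + q - 1) / q" unfolding B_def by (rule bound)
  have "card A \<noteq> 0"
  proof
    assume "card A = 0" with gA big bB show False by linarith
  qed
  hence Ane: "A \<noteq> {}" by auto
  have "card B \<noteq> 0"
  proof
    assume "card B = 0" with gA big bA show False by linarith
  qed
  hence Bne: "B \<noteq> {}" by auto
  have sub: "sumset A B \<subseteq> {x \<in> sumset U U. [x = a] (mod q)}"
  proof
    fix x assume "x \<in> sumset A B"
    then obtain u v where uv: "x = u + v" "u \<in> A" "v \<in> B" unfolding sumset_def by auto
    have "u mod q = c" "v mod q = (a - c) mod q" using uv unfolding A_def B_def C_def by auto
    have "(u + v) mod q = (u mod q + v mod q) mod q" by (simp only: mod_add_eq)
    also have "\<dots> = (c + (a - c) mod q) mod q" using \<open>u mod q = c\<close> \<open>v mod q = (a - c) mod q\<close> by (simp only:)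
    also have "\<dots> = (c + (a - c)) mod q" by (simp only: mod_add_right_eq)
    finally have "(u + v) mod q = a mod q" by simp
    moreover have "x \<in> sumset U U" using uv unfolding sumset_def A_def B_def C_def by auto
    ultimately show "x \<in> {x \<in> sumset U U. [x = a] (mod q)}" using uv by (simp add: cong_def)
  qed
  have finT: "finite {x \<in> sumset U U. [x = a] (mod q)}"
  proof -
    have "sumset U U = (\<lambda>(u,v). u + v) ` (U \<times> U)" unfolding sumset_def by auto
    thus ?thesis using finU by simp
  qed
  have "card A + card B \<le> card (sumset A B) + 1"
    using sumset_card[OF finC finC Ane[unfolded A_def] Bne[unfolded B_def]] unfolding A_def B_def .
  moreover have "card (sumset A B) \<le> card {x \<in> sumset U U. [x = a] (mod q)}"
    using card_mono[OF finT sub] .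
  ultimately have "card A + card B \<le> card {x \<in> sumset U U. [x = a] (mod q)} + 1"
    by linarith
  hence "real (card A + card B) \<le> real (card {x \<in> sumset U U. [x = a] (mod q)} + 1)"
    by (rule of_nat_mono)
  hence "real (card A) + real (card B) - 1 \<le> real (card {x \<in> sumset U U. [x = a] (mod q)})"
    by simp
  moreover have "2 / real_of_int q * real (card U) = 2 * real n / q" unfolding n_def by simp
  ultimately show ?thesis using gA by linarith
qed

end
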